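(* Let $n$ and $0<n_1<\cdots<n_d<n$ be integers with $m_1=n_1$, $m_k=n_k-n_{k-1}$ ($2\le k\le d$), $m_{d+1}=n-n_d$, and equip $\mathrm{Flag}(n_1,\dots,n_d;n)=\{(VJ_1V^{\mathsf T},\dots,VJ_{d+1}V^{\mathsf T}):V\in\mathrm{O}(n)\}\subseteq(\mathbb{R}^{n\times n})^{d+1}$ with the metric induced by the Frobenius inner product. Let $V(t)$ be a differentiable curve in $\mathrm{O}(n)$ with $\Lambda(t)=V(t)^{\mathsf T}\dot V(t)$, $\Lambda(k,k)\equiv0$ ($k=1,\dots,d+1$), and $c(t)=V(t)(J_1,\dots,J_{d+1})V(t)^{\mathsf T}$. Let $Y(t)=V(t)\big(X(t)J_1-J_1X(t),\dots,X(t)J_{d+1}-J_{d+1}X(t)\big)V(t)^{\mathsf T}$ with $X(t)\in\mathfrak{so}(n)$ differentiable and $X(k,k)\equiv0$. Then $Y$ is parallel along $c$ if and only if \[ \dot X(t)=\tfrac12\,\pi\big([X(t),\Lambda(t)]\big). \]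
   Context: $J_k=\operatorname{diag}(-I_{m_1},\dots,-I_{m_{k-1}},I_{m_k},-I_{m_{k+1}},\dots,-I_{m_{d+1}})$ for $k=1,\dots,d+1$. $V(M_1,\dots,M_{d+1})V^{\mathsf T}$ denotes $(VM_1V^{\mathsf T},\dots,VM_{d+1}V^{\mathsf T})$. For an $n\times n$ matrix $M$, $M(p,q)$ denotes its $(p,q)$ block in the partition $n=m_1+\cdots+m_{d+1}$; for $M\in\mathfrak{so}(n)$, $\pi(M)$ is obtained by setting all diagonal blocks $M(p,p)$ to zero; $[X,\Lambda]=X\Lambda-\Lambda X$. $Y$ is parallel along $c$ iff the orthogonal projection of $\dot Y(t)$ onto $\mathbb{T}_{c(t)}\mathrm{Flag}$ vanishes for all $t$. *)

theory Defs
  imports Complex_Main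
begin

text \<open>Real n x n matrices are represented as functions nat => nat => real; entries with an
index >= n are meant to be 0 (predicate is_mat). Indices run over 0..<n.\<close>

type_synonym rmat = "nat \<Rightarrow> nat \<Rightarrow> real"

definition is_mat :: "nat \<Rightarrow> rmat \<Rightarrow> bool" where
  "is_mat n A \<longleftrightarrow> (\<forall>i j. (n \<le> i \<or> n \<le> j) \<longrightarrow> A i j = 0)"

definition mzero :: rmat where "mzero = (\<lambda>i j. 0)"

definition mident :: "nat \<Rightarrow> rmat" where
  "mident n = (\<lambda>i j. if i < n \<and> j < n \<and> i = j then 1 else 0)"

definition mmul :: "nat \<Rightarrow> rmat \<Rightarrow> rmat \<Rightarrow> rmat" where
  "mmul n A B = (\<lambda>i j. if i < n \<and> j < n then (\<Sum>k<n. A i k * B k j) else 0)"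

definition mtr :: "rmat \<Rightarrow> rmat" where
  "mtr A = (\<lambda>i j. A j i)"

definition madd :: "rmat \<Rightarrow> rmat \<Rightarrow> rmat" where
  "madd A B = (\<lambda>i j. A i j + B i j)"

definition mdiff :: "rmat \<Rightarrow> rmat \<Rightarrow> rmat" where
  "mdiff A B = (\<lambda>i j. A i j - B i j)"

definition mscale :: "real \<Rightarrow> rmat \<Rightarrow> rmat" where
  "mscale c A = (\<lambda>i j. c * A i j)"

definition comm :: "nat \<Rightarrow> rmat \<Rightarrow> rmat \<Rightarrow> rmat" where
  "comm n X L = mdiff (mmul n X L) (mmul n L X)"

definition orth :: "nat \<Rightarrow> rmat \<Rightarrow> bool" where
  "orth n V \<longleftrightarrow> is_mat n V \<and> mmul n (mtr V) V = mident n"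

definition skew :: "nat \<Rightarrow> rmat \<Rightarrow> bool" where
  "skew n X \<longleftrightarrow> is_mat n X \<and> mtr X = mscale (-1) X"

text \<open>Block structure. nk 1 < ... < nk d are the integers n_1,...,n_d; bnd k is n_k with
bnd 0 = 0 and bnd (d+1) = n. Block k (1 <= k <= d+1) consists of indices
bnd (k-1) <= i < bnd k (0-based indices).\<close>
definition bnd :: "nat \<Rightarrow> nat \<Rightarrow> (nat \<Rightarrow> nat) \<Rightarrow> nat \<Rightarrow> nat" where
  "bnd n d nk k = (if k = 0 then 0 else if k \<le> d then nk k else n)"

definition blk :: "nat \<Rightarrow> nat \<Rightarrow> (nat \<Rightarrow> nat) \<Rightarrow> nat \<Rightarrow> nat" where
  "blk n d nk i = (LEAST k. i < bnd n d nk k)"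

definition Jmat :: "nat \<Rightarrow> nat \<Rightarrow> (nat \<Rightarrow> nat) \<Rightarrow> nat \<Rightarrow> rmat" where
  "Jmat n d nk k = (\<lambda>i j. if i < n \<and> j < n \<and> i = j
       then (if blk n d nk i = k then 1 else -1) else 0)"

definition offdiag :: "nat \<Rightarrow> nat \<Rightarrow> (nat \<Rightarrow> nat) \<Rightarrow> rmat \<Rightarrow> rmat" where
  "offdiag n d nk M = (\<lambda>i j. if blk n d nk i = blk n d nk j then 0 else M i j)"

definition diag_blocks_zero :: "nat \<Rightarrow> nat \<Rightarrow> (nat \<Rightarrow> nat) \<Rightarrow> rmat \<Rightarrow> bool" where
  "diag_blocks_zero n d nk M \<longleftrightarrow>
     (\<forall>i<n. \<forall>j<n. blk n d nk i = blk n d nk j \<longrightarrow> M i j = 0)"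

text \<open>Tuples in (R^{n x n})^{d+1}: functions nat => rmat, components indexed by k = 1..d+1
(other components are zero).\<close>
type_synonym rtup = "nat \<Rightarrow> rmat"

definition tup :: "nat \<Rightarrow> (nat \<Rightarrow> rmat) \<Rightarrow> rtup" where
  "tup d F = (\<lambda>k. if 1 \<le> k \<and> k \<le> d + 1 then F k else mzero)"

definition conj_tup :: "nat \<Rightarrow> nat \<Rightarrow> rmat \<Rightarrow> (nat \<Rightarrow> rmat) \<Rightarrow> rtup" where
  "conj_tup n d V M = tup d (\<lambda>k. mmul n (mmul n V (M k)) (mtr V))"

definition Flag :: "nat \<Rightarrow> nat \<Rightarrow> (nat \<Rightarrow> nat) \<Rightarrow> rtup set" where
  "Flag n d nk = {conj_tup n d V (Jmat n d nk) | V. orth n V}"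

definition tinner :: "nat \<Rightarrow> nat \<Rightarrow> rtup \<Rightarrow> rtup \<Rightarrow> real" where
  "tinner n d P Q = (\<Sum>k\<in>{1..d+1}. \<Sum>i<n. \<Sum>j<n. P k i j * Q k i j)"

definition tdiff :: "rtup \<Rightarrow> rtup \<Rightarrow> rtup" where
  "tdiff P Q = (\<lambda>k i j. P k i j - Q k i j)"

definition tzero :: rtup where "tzero = (\<lambda>k i j. 0)"

definition mat_deriv :: "(real \<Rightarrow> rmat) \<Rightarrow> rmat \<Rightarrow> real \<Rightarrow> bool" where
  "mat_deriv A A' t \<longleftrightarrow> (\<forall>i j. ((\<lambda>s. A s i j) has_real_derivative A' i j) (at t))"

definition tup_deriv :: "(real \<Rightarrow> rtup) \<Rightarrow> rtup \<Rightarrow> real \<Rightarrow> bool" where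
  "tup_deriv G G' t \<longleftrightarrow> (\<forall>k i j. ((\<lambda>s. G s k i j) has_real_derivative G' k i j) (at t))"

definition tangent :: "nat \<Rightarrow> nat \<Rightarrow> (nat \<Rightarrow> nat) \<Rightarrow> rtup \<Rightarrow> rtup set" where
  "tangent n d nk p = {v. \<exists>G. (\<forall>s. G s \<in> Flag n d nk) \<and> G 0 = p \<and> tup_deriv G v 0}"

definition is_orth_proj :: "nat \<Rightarrow> nat \<Rightarrow> rtup set \<Rightarrow> rtup \<Rightarrow> rtup \<Rightarrow> bool" where
  "is_orth_proj n d T v w \<longleftrightarrow> w \<in> T \<and> (\<forall>u\<in>T. tinner n d (tdiff v w) u = 0)"

definition parallel_along :: "nat \<Rightarrow> nat \<Rightarrow> (nat \<Rightarrow> nat) \<Rightarrow> (real \<Rightarrow> rtup) \<Rightarrow> (real \<Rightarrow> rtup) \<Rightarrow> bool" where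
  "parallel_along n d nk c Y \<longleftrightarrow>
     (\<forall>t. \<exists>Y'. tup_deriv Y Y' t \<and> is_orth_proj n d (tangent n d nk (c t)) Y' tzero)"

end

theory Submission imports Defs "Jordan_Normal_Form.Determinant" begin

lemma orth_right:
  assumes "orth n V"
  shows "mmul n V (mtr V) = mident n"
proof -
  let ?A = "Matrix.mat n n (\<lambda>(i,j). V j i)"
  let ?B = "Matrix.mat n n (\<lambda>(i,j). V i j)"
  have AB: "?A * ?B = 1\<^sub>m n"
  proof (rule eq_matI)
    fix i j assume ij: "i < dim_row (1\<^sub>m n)" "j < dim_col (1\<^sub>m n)"
    have "mmul n (mtr V) V i j = mident n i j" using assms unfolding orth_def by simp
    then have "(\<Sum>k<n. V k i * V k j) = (if i = j then 1 else 0)"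
      using ij by (simp add: mmul_def mtr_def mident_def)
    then show "(?A * ?B) $$ (i, j) = 1\<^sub>m n $$ (i, j)"
      using ij by (simp add: scalar_prod_def atLeast0LessThan)
  qed auto
  have "?B * ?A = 1\<^sub>m n"
    by (rule mat_mult_left_right_inverse[OF _ _ AB]) auto
  show ?thesis
  proof (intro ext)
    fix i j
    show "mmul n V (mtr V) i j = mident n i j"
    proof (cases "i < n \<and> j < n")
      case True
      have "(?B * ?A) $$ (i,j) = 1\<^sub>m n $$ (i, j)" using \<open>?B * ?A = 1\<^sub>m n\<close> by simp
      then show ?thesis using True
        by (simp add: scalar_prod_def atLeast0LessThan mmul_def mtr_def mident_def)
    next
      case False then show ?thesis by (auto simp: mmul_def mident_def)
    qed
  qed
qed

lemma mmul_assoc: "mmul n (mmul n A B) C = mmul n A (mmul n B C)"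
proof (intro ext)
  fix i j
  show "mmul n (mmul n A B) C i j = mmul n A (mmul n B C) i j"
  proof (cases "i < n \<and> j < n")
    case True
    then have "mmul n (mmul n A B) C i j = (\<Sum>k<n. \<Sum>l<n. A i l * B l k * C k j)"
      by (simp add: mmul_def sum_distrib_right)
    also have "\<dots> = (\<Sum>l<n. \<Sum>k<n. A i l * B l k * C k j)" by (rule sum.swap)
    also have "\<dots> = mmul n A (mmul n B C) i j" using True
      by (simp add: mmul_def sum_distrib_left mult.assoc)
    finally show ?thesis .
  qed (auto simp: mmul_def)
qed

lemma is_mat_mmul[simp]: "is_mat n (mmul n A B)"
  by (auto simp: is_mat_def mmul_def)

lemma is_mat_mident[simp]: "is_mat n (mident n)"
  by (auto simp: is_mat_def mident_def)

lemma mmul_ident_left: "is_mat n A \<Longrightarrow> mmul n (mident n) A = A"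
proof (intro ext)
  fix i j assume A: "is_mat n A"
  show "mmul n (mident n) A i j = A i j"
  proof (cases "i < n \<and> j < n")
    case True
    then have "mmul n (mident n) A i j = (\<Sum>k<n. (if i = k then 1 else 0) * A k j)"
      by (simp add: mmul_def mident_def)
    also have "\<dots> = (\<Sum>k<n. if k = i then A k j else 0)" by (rule sum.cong) auto
    also have "\<dots> = A i j" using True by (subst sum.delta) auto
    finally show ?thesis .
  qed (use A in \<open>auto simp: mmul_def is_mat_def\<close>)
qed

lemma mmul_ident_right: "is_mat n A \<Longrightarrow> mmul n A (mident n) = A"
proof (intro ext)
  fix i j assume A: "is_mat n A"
  show "mmul n A (mident n) i j = A i j"
  proof (cases "i < n \<and> j < n")
    case True
    then have "mmul n A (mident n) i j = (\<Sum>k<n. A i k * (if k = j then 1 else 0))"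
      by (simp add: mmul_def mident_def)
    also have "\<dots> = (\<Sum>k<n. if k = j then A i k else 0)" by (rule sum.cong) auto
    also have "\<dots> = A i j" using True by (subst sum.delta) auto
    finally show ?thesis .
  qed (use A in \<open>auto simp: mmul_def is_mat_def\<close>)
qed

lemma mtr_mmul: "mtr (mmul n A B) = mmul n (mtr B) (mtr A)"
  by (auto simp: mtr_def mmul_def mult.commute intro!: ext)

lemma mtr_mtr[simp]: "mtr (mtr A) = A"
  by (simp add: mtr_def)

lemma is_mat_mtr[simp]: "is_mat n (mtr A) = is_mat n A"
  by (auto simp: is_mat_def mtr_def)

definition fro :: "nat \<Rightarrow> rmat \<Rightarrow> rmat \<Rightarrow> real" where
  "fro n A B = (\<Sum>i<n. \<Sum>j<n. A i j * B i j)"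

lemma fro_conj: "fro n (mmul n V (mmul n A (mtr V))) B = fro n A (mmul n (mtr V) (mmul n B V))"
proof -
  have "fro n (mmul n V (mmul n A (mtr V))) B =
     (\<Sum>i<n. \<Sum>j<n. \<Sum>k<n. \<Sum>l<n. V i k * A k l * V j l * B i j)"
    by (simp add: fro_def mmul_def mtr_def sum_distrib_left sum_distrib_right mult.assoc)
  also have "\<dots> = (\<Sum>i<n. \<Sum>k<n. \<Sum>j<n. \<Sum>l<n. V i k * A k l * V j l * B i j)"
    by (intro sum.cong refl sum.swap)
  also have "\<dots> = (\<Sum>k<n. \<Sum>i<n. \<Sum>j<n. \<Sum>l<n. V i k * A k l * V j l * B i j)"
    by (rule sum.swap)
  also have "\<dots> = (\<Sum>k<n. \<Sum>i<n. \<Sum>l<n. \<Sum>j<n. V i k * A k l * V j l * B i j)"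
    by (intro sum.cong refl sum.swap)
  also have "\<dots> = (\<Sum>k<n. \<Sum>l<n. \<Sum>i<n. \<Sum>j<n. V i k * A k l * V j l * B i j)"
    by (intro sum.cong refl sum.swap)
  also have "\<dots> = fro n A (mmul n (mtr V) (mmul n B V))"
    by (simp add: fro_def mmul_def mtr_def sum_distrib_left sum_distrib_right mult_ac)
  finally show ?thesis .
qed

lemma mat_deriv_unique: "mat_deriv A A1 t \<Longrightarrow> mat_deriv A A2 t \<Longrightarrow> A1 = A2"
  unfolding mat_deriv_def by (auto intro!: ext DERIV_unique)

lemma mat_deriv_const: "mat_deriv (\<lambda>s. C) mzero t"
  by (simp add: mat_deriv_def mzero_def)

lemma mat_deriv_mtr: "mat_deriv A A' t \<Longrightarrow> mat_deriv (\<lambda>s. mtr (A s)) (mtr A') t"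
  by (simp add: mat_deriv_def mtr_def)

lemma mat_deriv_mmul:
  assumes "mat_deriv A A' t" "mat_deriv B B' t"
  shows "mat_deriv (\<lambda>s. mmul n (A s) (B s)) (madd (mmul n A' (B t)) (mmul n (A t) B')) t"
  unfolding mat_deriv_def
proof (intro allI)
  fix i j
  show "((\<lambda>s. mmul n (A s) (B s) i j) has_real_derivative madd (mmul n A' (B t)) (mmul n (A t) B') i j) (at t)"
  proof (cases "i < n \<and> j < n")
    case True
    have "((\<lambda>s. \<Sum>k<n. A s i k * B s k j) has_real_derivative (\<Sum>k<n. A' i k * B t k j + A t i k * B' k j)) (at t)"
      using assms unfolding mat_deriv_def
      by (intro DERIV_sum) (auto intro!: derivative_eq_intros)
    moreover have e1: "(\<lambda>s. mmul n (A s) (B s) i j) = (\<lambda>s. \<Sum>k<n. A s i k * B s k j)"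
      using True by (simp add: mmul_def)
    moreover have e2: "madd (mmul n A' (B t)) (mmul n (A t) B') i j = (\<Sum>k<n. A' i k * B t k j + A t i k * B' k j)"
      using True by (simp add: mmul_def madd_def sum.distrib)
    ultimately show ?thesis by simp
  next
    case False
    then have "(\<lambda>s. mmul n (A s) (B s) i j) = (\<lambda>s. 0)"
      by (auto simp: mmul_def)
    moreover have "madd (mmul n A' (B t)) (mmul n (A t) B') i j = 0"
      using False by (auto simp: mmul_def madd_def)
    ultimately show ?thesis by simp
  qed
qed

lemma mat_deriv_zero_const:
  assumes "mat_deriv A A' t" "\<forall>s. A s i j = c" shows "A' i j = 0"
proof -
  have "((\<lambda>s. A s i j) has_real_derivative A' i j) (at t)" using assms(1) by (simp add: mat_deriv_def)
  moreover have "((\<lambda>s. A s i j) has_real_derivative 0) (at t)" using assms(2) by simp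
  ultimately show ?thesis by (rule DERIV_unique)
qed

definition eps :: "nat \<Rightarrow> nat \<Rightarrow> (nat \<Rightarrow> nat) \<Rightarrow> nat \<Rightarrow> nat \<Rightarrow> real" where
  "eps n d nk k i = (if blk n d nk i = k then 1 else -1)"

lemma Jmat_eps: "Jmat n d nk k i j = (if i < n \<and> j < n \<and> i = j then eps n d nk k i else 0)"
  by (simp add: Jmat_def eps_def)

lemma blk_range:
  assumes "i < n" shows "1 \<le> blk n d nk i \<and> blk n d nk i \<le> d + 1"
proof -
  have ex: "i < bnd n d nk (d+1)" using assms by (simp add: bnd_def)
  have "blk n d nk i \<le> d + 1" unfolding blk_def by (rule Least_le) (rule ex)
  moreover have "i < bnd n d nk (blk n d nk i)" unfolding blk_def by (rule LeastI) (rule ex)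
  then have "blk n d nk i \<noteq> 0" by (auto simp: bnd_def split: if_splits)
  ultimately show ?thesis by auto
qed

lemma is_mat_Jmat[simp]: "is_mat n (Jmat n d nk k)"
  by (auto simp: is_mat_def Jmat_def)

lemma mmul_J_right: "mmul n A (Jmat n d nk k) i j = (if i < n \<and> j < n then A i j * eps n d nk k j else 0)"
proof (cases "i < n \<and> j < n")
  case True
  then have "mmul n A (Jmat n d nk k) i j = (\<Sum>l<n. A i l * (if l < n \<and> j < n \<and> l = j then eps n d nk k l else 0))"
    by (simp add: mmul_def Jmat_eps)
  also have "\<dots> = (\<Sum>l<n. if l = j then A i l * eps n d nk k j else 0)" by (rule sum.cong) (use True in auto)
  also have "\<dots> = A i j * eps n d nk k j" using True by (subst sum.delta) auto
  finally show ?thesis using True by simp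
qed (auto simp: mmul_def)

lemma mmul_J_left: "mmul n (Jmat n d nk k) A i j = (if i < n \<and> j < n then eps n d nk k i * A i j else 0)"
proof (cases "i < n \<and> j < n")
  case True
  then have "mmul n (Jmat n d nk k) A i j = (\<Sum>l<n. (if i < n \<and> l < n \<and> i = l then eps n d nk k i else 0) * A l j)"
    by (simp add: mmul_def Jmat_eps)
  also have "\<dots> = (\<Sum>l<n. if l = i then eps n d nk k i * A l j else 0)" by (rule sum.cong) (use True in auto)
  also have "\<dots> = eps n d nk k i * A i j" using True by (subst sum.delta) auto
  finally show ?thesis using True by simp
qed (auto simp: mmul_def)

lemma comm_J: "comm n X (Jmat n d nk k) i j =
   (if i < n \<and> j < n then X i j * (eps n d nk k j - eps n d nk k i) else 0)"
  by (simp add: comm_def mdiff_def mmul_J_right mmul_J_left algebra_simps)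

lemma sum_two:
  assumes "a < (n::nat)" "b < n" "a \<noteq> b" "\<forall>l<n. l \<noteq> a \<and> l \<noteq> b \<longrightarrow> f l = 0"
  shows "(\<Sum>l<n. f l) = f a + f b"
proof -
  have "(\<Sum>l<n. f l) = (\<Sum>l\<in>{a,b}. f l)"
    using assms by (intro sum.mono_neutral_right) auto
  also have "\<dots> = f a + f b" using assms by simp
  finally show ?thesis .
qed

lemma S1:
  assumes W1: "\<forall>k\<in>{1..d+1}. \<forall>a<n. \<forall>b<n. W k a b * (eps n d nk k a + eps n d nk k b) = 0"
    and W2: "\<forall>a<n. \<forall>b<n. (\<Sum>k\<in>{1..d+1}. W k a b) = 0"
    and C: "\<forall>a<n. \<forall>b<n. blk n d nk a \<noteq> blk n d nk b \<longrightarrow> A (blk n d nk a) a b = A (blk n d nk b) a b"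
  shows "(\<Sum>k\<in>{1..d+1}. fro n (A k) (W k)) = 0"
proof -
  have "(\<Sum>k\<in>{1..d+1}. fro n (A k) (W k)) = (\<Sum>k\<in>{1..d+1}. \<Sum>a<n. \<Sum>b<n. A k a b * W k a b)"
    by (simp add: fro_def)
  also have "\<dots> = (\<Sum>a<n. \<Sum>k\<in>{1..d+1}. \<Sum>b<n. A k a b * W k a b)" by (rule sum.swap)
  also have "\<dots> = (\<Sum>a<n. \<Sum>b<n. \<Sum>k\<in>{1..d+1}. A k a b * W k a b)" by (intro sum.cong refl sum.swap)
  also have "\<dots> = (\<Sum>a<n. \<Sum>b<n. 0)"
  proof (intro sum.cong refl)
    fix a b assume a: "a \<in> {..<n}" and b: "b \<in> {..<n}"
    define p where "p = blk n d nk a"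
    define q where "q = blk n d nk b"
    have pr: "p \<in> {1..d+1}" using blk_range[of a n d nk] a by (auto simp: p_def)
    have qr: "q \<in> {1..d+1}" using blk_range[of b n d nk] b by (auto simp: q_def)
    show "(\<Sum>k\<in>{1..d+1}. A k a b * W k a b) = 0"
    proof (cases "p = q")
      case True
      have "W k a b = 0" if "k \<in> {1..d+1}" for k
      proof -
        have "W k a b * (eps n d nk k a + eps n d nk k b) = 0" using W1 that a b by auto
        moreover have "eps n d nk k a + eps n d nk k b \<noteq> 0" using True by (auto simp: eps_def p_def q_def)
        ultimately show ?thesis by simp
      qed
      then show ?thesis by simp
    next
      case False
      have Wz: "W k a b = 0" if "k \<in> {1..d+1}" "k \<noteq> p" "k \<noteq> q" for k
      proof -
        have "W k a b * (eps n d nk k a + eps n d nk k b) = 0" using W1 that a b by auto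
        moreover have "eps n d nk k a + eps n d nk k b \<noteq> 0" using that by (auto simp: eps_def p_def q_def)
        ultimately show ?thesis by simp
      qed
      have "(\<Sum>k\<in>{1..d+1}. A k a b * W k a b) = (\<Sum>k\<in>{p,q}. A k a b * W k a b)"
        using pr qr Wz by (intro sum.mono_neutral_right) auto
      also have "\<dots> = A p a b * W p a b + A q a b * W q a b" using False by simp
      also have "(\<Sum>k\<in>{1..d+1}. W k a b) = (\<Sum>k\<in>{p,q}. W k a b)"
        using pr qr Wz by (intro sum.mono_neutral_right) auto
      then have "W p a b + W q a b = 0" using W2 a b False by simp
      moreover have "A p a b = A q a b" using C a b False unfolding p_def q_def by blast
      ultimately show ?thesis
        by (simp add: algebra_simps) (metis add.commute add_eq_0_iff distrib_left mult_zero_right)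
    qed
  qed
  finally show ?thesis by simp
qed

lemma mmul_comm_left:
  assumes "a < n" "b < n"
  shows "mmul n L (comm n X (Jmat n d nk k)) a b = (\<Sum>c<n. L a c * (X c b * (eps n d nk k b - eps n d nk k c)))"
  using assms by (simp add: mmul_def comm_J)

lemma mmul_comm_right:
  assumes "a < n" "b < n"
  shows "mmul n (comm n X (Jmat n d nk k)) (mtr L) a b = (\<Sum>c<n. (X a c * (eps n d nk k c - eps n d nk k a)) * L b c)"
  using assms by (simp add: mmul_def comm_J mtr_def)

lemma S2:
  fixes L X X1 :: rmat
  assumes Lz: "diag_blocks_zero n d nk L" and Xz: "diag_blocks_zero n d nk X"
    and Ls: "\<forall>i j. L j i = - L i j"
    and a: "a < n" and b: "b < n" and pq: "blk n d nk a \<noteq> blk n d nk b"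
  defines "AA k \<equiv> madd (madd (mmul n L (comm n X (Jmat n d nk k))) (comm n X1 (Jmat n d nk k)))
                      (mmul n (comm n X (Jmat n d nk k)) (mtr L))"
  shows "AA (blk n d nk a) a b - AA (blk n d nk b) a b = 2 * comm n X L a b - 4 * X1 a b"
proof -
  define p where "p = blk n d nk a"
  define q where "q = blk n d nk b"
  have ea: "eps n d nk p a = 1" "eps n d nk q a = -1" using pq by (auto simp: eps_def p_def q_def)
  have eb: "eps n d nk p b = -1" "eps n d nk q b = 1" using pq by (auto simp: eps_def p_def q_def)
  have t1: "L a c * (X c b * (eps n d nk p b - eps n d nk p c)) - L a c * (X c b * (eps n d nk q b - eps n d nk q c))
      = - 2 * (L a c * X c b)" if c: "c < n" for c
  proof -
    consider "blk n d nk c = p" | "blk n d nk c = q" | "blk n d nk c \<noteq> p \<and> blk n d nk c \<noteq> q" by blast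
    then show ?thesis
    proof cases
      case 1
      then have "L a c = 0" using Lz a c unfolding diag_blocks_zero_def p_def by auto
      then show ?thesis by simp
    next
      case 2
      then have "X c b = 0" using Xz b c unfolding diag_blocks_zero_def q_def by auto
      then show ?thesis by simp
    next
      case 3
      then show ?thesis using eb by (simp add: eps_def algebra_simps)
    qed
  qed
  have t2: "(X a c * (eps n d nk p c - eps n d nk p a)) * L b c - (X a c * (eps n d nk q c - eps n d nk q a)) * L b c
      = 2 * (X a c * L c b)" if c: "c < n" for c
  proof -
    consider "blk n d nk c = p" | "blk n d nk c = q" | "blk n d nk c \<noteq> p \<and> blk n d nk c \<noteq> q" by blast
    then show ?thesis
    proof cases
      case 1
      then have "X a c = 0" using Xz a c unfolding diag_blocks_zero_def p_def by auto
      then show ?thesis by simp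
    next
      case 2
      then have "L b c = 0" using Lz b c unfolding diag_blocks_zero_def q_def by auto
      moreover have "L c b = - L b c" using Ls by blast
      ultimately have "L b c = 0" "L c b = 0" by auto
      then show ?thesis by simp
    next
      case 3
      then show ?thesis using ea Ls[rule_format, of b c] by (simp add: eps_def algebra_simps)
    qed
  qed
  have "AA p a b - AA q a b =
     ((\<Sum>c<n. L a c * (X c b * (eps n d nk p b - eps n d nk p c))) - (\<Sum>c<n. L a c * (X c b * (eps n d nk q b - eps n d nk q c))))
     + ((\<Sum>c<n. (X a c * (eps n d nk p c - eps n d nk p a)) * L b c) - (\<Sum>c<n. (X a c * (eps n d nk q c - eps n d nk q a)) * L b c))
     + (X1 a b * (eps n d nk p b - eps n d nk p a) - X1 a b * (eps n d nk q b - eps n d nk q a))"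
    unfolding AA_def madd_def using a b by (simp add: mmul_comm_left mmul_comm_right comm_J)
  also have "\<dots> = (\<Sum>c<n. - 2 * (L a c * X c b)) + (\<Sum>c<n. 2 * (X a c * L c b)) - 4 * X1 a b"
    using ea eb t1 t2 by (simp add: sum_subtractf[symmetric])
  also have "\<dots> = 2 * comm n X L a b - 4 * X1 a b"
  proof -
    have s1: "(\<Sum>c<n. - 2 * (L a c * X c b)) = - 2 * (\<Sum>c<n. L a c * X c b)" by (simp add: sum_distrib_left)
    have s2: "(\<Sum>c<n. 2 * (X a c * L c b)) = 2 * (\<Sum>c<n. X a c * L c b)" by (simp add: sum_distrib_left)
    have s3: "comm n X L a b = (\<Sum>c<n. X a c * L c b) - (\<Sum>c<n. L a c * X c b)"
      using a b by (simp add: comm_def mdiff_def mmul_def)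
    show ?thesis unfolding s1 s2 s3 by simp
  qed
  finally show ?thesis by (simp add: p_def q_def)
qed

definition gz :: "nat \<Rightarrow> nat \<Rightarrow> rmat" where
  "gz a b = (\<lambda>i j. if i = a \<and> j = b then 1 else if i = b \<and> j = a then -1 else 0)"

definition Wg :: "nat \<Rightarrow> nat \<Rightarrow> (nat \<Rightarrow> nat) \<Rightarrow> nat \<Rightarrow> nat \<Rightarrow> nat \<Rightarrow> rmat" where
  "Wg n d nk a b k = madd (mmul n (gz a b) (Jmat n d nk k)) (mmul n (Jmat n d nk k) (mtr (gz a b)))"

lemma Wg_entry:
  assumes "a \<noteq> b"
  shows "Wg n d nk a b k i j = (if i < n \<and> j < n \<and> ((i = a \<and> j = b) \<or> (i = b \<and> j = a))
     then eps n d nk k b - eps n d nk k a else 0)"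
  using assms by (auto simp: Wg_def madd_def mmul_J_left mmul_J_right gz_def mtr_def)

lemma fro_Wg:
  assumes a: "a < n" and b: "b < n" and ab: "a \<noteq> b"
  shows "fro n A (Wg n d nk a b k) = (eps n d nk k b - eps n d nk k a) * (A a b + A b a)"
proof -
  let ?c = "eps n d nk k b - eps n d nk k a"
  have inner: "(\<Sum>j<n. A i j * Wg n d nk a b k i j) =
      (if i = a then A a b * ?c else if i = b then A b a * ?c else 0)" if i: "i < n" for i
  proof -
    have "(\<Sum>j<n. A i j * Wg n d nk a b k i j) = A i a * Wg n d nk a b k i a + A i b * Wg n d nk a b k i b"
      using a b ab by (intro sum_two) (auto simp: Wg_entry)
    then show ?thesis using a b ab i by (auto simp: Wg_entry)
  qed
  have "fro n A (Wg n d nk a b k) = (\<Sum>i<n. if i = a then A a b * ?c else if i = b then A b a * ?c else 0)"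
    unfolding fro_def by (intro sum.cong refl) (simp add: inner)
  also have "\<dots> = A a b * ?c + A b a * ?c"
    using a b ab by (subst sum_two) auto
  finally show ?thesis by (simp add: algebra_simps)
qed

lemma S3:
  assumes a: "a < n" and b: "b < n" and pq: "blk n d nk a \<noteq> blk n d nk b"
  shows "(\<Sum>k\<in>{1..d+1}. fro n (A k) (Wg n d nk a b k)) =
     2 * (A (blk n d nk b) a b + A (blk n d nk b) b a) - 2 * (A (blk n d nk a) a b + A (blk n d nk a) b a)"
proof -
  define p where "p = blk n d nk a"
  define q where "q = blk n d nk b"
  have ab: "a \<noteq> b" using pq by auto
  have pr: "p \<in> {1..d+1}" using blk_range[of a n d nk] a by (auto simp: p_def)
  have qr: "q \<in> {1..d+1}" using blk_range[of b n d nk] b by (auto simp: q_def)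
  have "(\<Sum>k\<in>{1..d+1}. fro n (A k) (Wg n d nk a b k)) =
        (\<Sum>k\<in>{1..d+1}. (eps n d nk k b - eps n d nk k a) * (A k a b + A k b a))"
    using a b ab by (simp add: fro_Wg)
  also have "\<dots> = (\<Sum>k\<in>{p,q}. (eps n d nk k b - eps n d nk k a) * (A k a b + A k b a))"
    using pr qr by (intro sum.mono_neutral_right) (auto simp: eps_def p_def q_def)
  also have "\<dots> = 2 * (A q a b + A q b a) - 2 * (A p a b + A p b a)"
    using pq by (simp add: eps_def p_def q_def algebra_simps)
  finally show ?thesis by (simp add: p_def q_def)
qed

lemma mmul_madd_left: "mmul n (madd A B) C = madd (mmul n A C) (mmul n B C)"
  by (auto simp: mmul_def madd_def sum.distrib algebra_simps intro!: ext)

lemma mmul_madd_right: "mmul n A (madd B C) = madd (mmul n A B) (mmul n A C)"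
  by (auto simp: mmul_def madd_def sum.distrib algebra_simps intro!: ext)

lemma mmul_mzero_left[simp]: "mmul n mzero A = mzero"
  by (auto simp: mmul_def mzero_def intro!: ext)

lemma mmul_mzero_right[simp]: "mmul n A mzero = mzero"
  by (auto simp: mmul_def mzero_def intro!: ext)

lemma madd_mzero[simp]: "madd A mzero = A" "madd mzero A = A"
  by (auto simp: madd_def mzero_def intro!: ext)

lemma mtr_mident[simp]: "mtr (mident n) = mident n"
  by (auto simp: mtr_def mident_def intro!: ext)

lemma orth_is_mat: "orth n U \<Longrightarrow> is_mat n U"
  by (simp add: orth_def)

lemma orth_cancel1: "orth n U \<Longrightarrow> is_mat n Z \<Longrightarrow> mmul n (mtr U) (mmul n U Z) = Z"
  by (simp add: mmul_assoc[symmetric] orth_def mmul_ident_left)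

lemma orth_cancel2: "orth n U \<Longrightarrow> is_mat n Z \<Longrightarrow> mmul n U (mmul n (mtr U) Z) = Z"
  by (simp add: mmul_assoc[symmetric] orth_right mmul_ident_left)

lemma orth_tail: "orth n U \<Longrightarrow> is_mat n Z \<Longrightarrow> mmul n Z (mmul n (mtr U) U) = Z"
  by (simp add: orth_def mmul_ident_right)

lemma JJ_cancel: "is_mat n Z \<Longrightarrow> mmul n (Jmat n d nk k) (mmul n (Jmat n d nk k) Z) = Z"
proof -
  assume Z: "is_mat n Z"
  have "mmul n (Jmat n d nk k) (Jmat n d nk k) = mident n"
    by (auto simp: mmul_J_left Jmat_eps mident_def eps_def intro!: ext)
  then show ?thesis using Z by (simp add: mmul_assoc[symmetric] mmul_ident_left)
qed

lemma mmul_entry: "i < n \<Longrightarrow> j < n \<Longrightarrow> mmul n A B i j = (\<Sum>l<n. A i l * B l j)"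
  by (simp add: mmul_def)

lemma conjJ_entry:
  assumes "i < n" "j < n"
  shows "mmul n (mmul n U (Jmat n d nk k)) (mtr U) i j = (\<Sum>l<n. U i l * eps n d nk k l * U j l)"
  apply (subst mmul_entry[OF assms])
  apply (intro sum.cong refl)
  using assms by (simp add: mmul_J_right mtr_def)

lemma eps_sum:
  assumes "l < n"
  shows "(\<Sum>k\<in>{1..d+1}. eps n d nk k l) = 1 - real d"
proof -
  have r: "blk n d nk l \<in> {1..d+1}" using blk_range[OF assms] by auto
  have "(\<Sum>k\<in>{1..d+1}. eps n d nk k l) = (\<Sum>k\<in>{1..d+1}. 2 * (if k = blk n d nk l then 1 else 0) - 1)"
    by (intro sum.cong) (auto simp: eps_def)
  also have "\<dots> = 2 - real (d + 1)"
    using r by (simp add: sum_subtractf sum.delta' sum_distrib_left[symmetric])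
  finally show ?thesis by simp
qed

lemma P_sum:
  assumes U: "orth n U" and i: "i < n" and j: "j < n"
  shows "(\<Sum>k\<in>{1..d+1}. mmul n (mmul n U (Jmat n d nk k)) (mtr U) i j) = (1 - real d) * mident n i j"
proof -
  have "(\<Sum>k\<in>{1..d+1}. mmul n (mmul n U (Jmat n d nk k)) (mtr U) i j)
     = (\<Sum>k\<in>{1..d+1}. \<Sum>l<n. U i l * eps n d nk k l * U j l)"
    using i j by (simp add: conjJ_entry)
  also have "\<dots> = (\<Sum>l<n. \<Sum>k\<in>{1..d+1}. U i l * eps n d nk k l * U j l)" by (rule sum.swap)
  also have "\<dots> = (\<Sum>l<n. U i l * U j l * (\<Sum>k\<in>{1..d+1}. eps n d nk k l))"
  proof (intro sum.cong refl)
    fix l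
    show "(\<Sum>k\<in>{1..d+1}. U i l * eps n d nk k l * U j l) = U i l * U j l * (\<Sum>k\<in>{1..d+1}. eps n d nk k l)"
      by (subst sum_distrib_left) (rule sum.cong; simp add: mult_ac)
  qed
  also have "\<dots> = (\<Sum>l<n. U i l * U j l * (1 - real d))"
    by (intro sum.cong refl) (subst eps_sum, auto)
  also have "\<dots> = (1 - real d) * mmul n U (mtr U) i j"
    using i j by (simp add: mmul_def mtr_def sum_distrib_left mult_ac)
  also have "\<dots> = (1 - real d) * mident n i j" using orth_right[OF U] by simp
  finally show ?thesis .
qed

lemma flag_mem: "orth n V \<Longrightarrow> conj_tup n d V (Jmat n d nk) \<in> Flag n d nk"
  by (auto simp: Flag_def)

lemma tzero_tangent: "p \<in> Flag n d nk \<Longrightarrow> tzero \<in> tangent n d nk p"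
  unfolding tangent_def by (rule CollectI, rule exI[of _ "\<lambda>s. p"]) (simp add: tup_deriv_def tzero_def)

lemma P_sq:
  assumes U: "orth n U"
  shows "mmul n (mmul n (mmul n U (Jmat n d nk k)) (mtr U)) (mmul n (mmul n U (Jmat n d nk k)) (mtr U)) = mident n"
proof -
  have "mmul n (mmul n (mmul n U (Jmat n d nk k)) (mtr U)) (mmul n (mmul n U (Jmat n d nk k)) (mtr U))
      = mmul n U (mmul n (Jmat n d nk k) (mmul n (mtr U) (mmul n U (mmul n (Jmat n d nk k) (mtr U)))))"
    by (simp add: mmul_assoc)
  also have "\<dots> = mmul n U (mtr U)"
    using U by (simp add: orth_cancel1 JJ_cancel orth_is_mat)
  finally show ?thesis using orth_right[OF U] by simp
qed

lemma tangent_props: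
  assumes V0: "orth n V0" and u: "u \<in> tangent n d nk (conj_tup n d V0 (Jmat n d nk))"
  defines "W k \<equiv> mmul n (mtr V0) (mmul n (u k) V0)"
  shows "\<forall>k\<in>{1..d+1}. \<forall>a<n. \<forall>b<n. W k a b * (eps n d nk k a + eps n d nk k b) = 0"
    and "\<forall>a<n. \<forall>b<n. (\<Sum>k\<in>{1..d+1}. W k a b) = 0"
proof -
  obtain G where G: "\<forall>s. G s \<in> Flag n d nk" "G 0 = conj_tup n d V0 (Jmat n d nk)" "tup_deriv G u 0"
    using u unfolding tangent_def by blast
  have "\<forall>s. \<exists>U. orth n U \<and> G s = conj_tup n d U (Jmat n d nk)"
    using G(1) unfolding Flag_def by blast
  then obtain U where U: "\<And>s. orth n (U s)" "\<And>s. G s = conj_tup n d (U s) (Jmat n d nk)" by metis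
  let ?J = "Jmat n d nk"
  define P where "P k = mmul n (mmul n V0 (?J k)) (mtr V0)" for k
  have Gk: "G s k = mmul n (mmul n (U s) (?J k)) (mtr (U s))" if "k \<in> {1..d+1}" for s k
    using that U(2)[of s] by (simp add: conj_tup_def tup_def)
  have G0k: "G 0 k = P k" if "k \<in> {1..d+1}" for k
    using that G(2) by (simp add: conj_tup_def tup_def P_def)
  have ud: "mat_deriv (\<lambda>s. G s k) (u k) 0" for k
    using G(3) by (simp add: tup_deriv_def mat_deriv_def)
  show "\<forall>k\<in>{1..d+1}. \<forall>a<n. \<forall>b<n. W k a b * (eps n d nk k a + eps n d nk k b) = 0"
  proof (intro ballI allI impI)
    fix k a b assume k: "k \<in> {1..d+1}" and a: "a < n" and b: "b < n"
    have "mat_deriv (\<lambda>s. mmul n (G s k) (G s k)) (madd (mmul n (u k) (G 0 k)) (mmul n (G 0 k) (u k))) 0"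
      by (rule mat_deriv_mmul[OF ud ud])
    moreover have "(\<lambda>s. mmul n (G s k) (G s k)) = (\<lambda>s. mident n)"
      using k U(1) by (simp add: Gk P_sq)
    ultimately have "mat_deriv (\<lambda>s. mident n) (madd (mmul n (u k) (P k)) (mmul n (P k) (u k))) 0"
      using k G0k by simp
    then have z: "madd (mmul n (u k) (P k)) (mmul n (P k) (u k)) = mzero"
      using mat_deriv_unique mat_deriv_const by blast
    have e1: "mmul n (W k) (?J k) = mmul n (mtr V0) (mmul n (mmul n (u k) (P k)) V0)"
      using V0 orth_tail[OF V0 is_mat_Jmat[of n d nk k]] by (simp add: W_def P_def mmul_assoc orth_cancel1)
    have e2: "mmul n (?J k) (W k) = mmul n (mtr V0) (mmul n (mmul n (P k) (u k)) V0)"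
      using V0 by (simp add: W_def P_def mmul_assoc orth_cancel1)
    have "madd (mmul n (W k) (?J k)) (mmul n (?J k) (W k)) = mzero"
      unfolding e1 e2 by (simp add: mmul_madd_left[symmetric] mmul_madd_right[symmetric] z)
    then have "madd (mmul n (W k) (?J k)) (mmul n (?J k) (W k)) a b = 0" by (simp add: mzero_def)
    then show "W k a b * (eps n d nk k a + eps n d nk k b) = 0"
      using a b by (simp add: madd_def mmul_J_left mmul_J_right algebra_simps)
  qed
  have usum: "(\<Sum>k\<in>{1..d+1}. u k i j) = 0" if i: "i < n" and j: "j < n" for i j
  proof -
    have "((\<lambda>s. \<Sum>k\<in>{1..d+1}. G s k i j) has_real_derivative (\<Sum>k\<in>{1..d+1}. u k i j)) (at 0)"
      using ud unfolding mat_deriv_def by (intro DERIV_sum) auto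
    moreover have "(\<lambda>s. \<Sum>k\<in>{1..d+1}. G s k i j) = (\<lambda>s. (1 - real d) * mident n i j)"
    proof
      fix s
      show "(\<Sum>k\<in>{1..d+1}. G s k i j) = (1 - real d) * mident n i j"
        using P_sum[OF U(1)[of s] i j, of d nk] by (simp add: Gk)
    qed
    ultimately have "((\<lambda>s. (1 - real d) * mident n i j) has_real_derivative (\<Sum>k\<in>{1..d+1}. u k i j)) (at 0)"
      by simp
    then show ?thesis using DERIV_const DERIV_unique by blast
  qed
  show "\<forall>a<n. \<forall>b<n. (\<Sum>k\<in>{1..d+1}. W k a b) = 0"
  proof (intro allI impI)
    fix a b assume a: "a < n" and b: "b < n"
    have "(\<Sum>k\<in>{1..d+1}. W k a b) = (\<Sum>k\<in>{1..d+1}. \<Sum>l<n. \<Sum>m<n. V0 l a * u k l m * V0 m b)"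
      using a b by (simp add: W_def mmul_def mtr_def sum_distrib_left mult.assoc)
    also have "\<dots> = (\<Sum>l<n. \<Sum>k\<in>{1..d+1}. \<Sum>m<n. V0 l a * u k l m * V0 m b)" by (rule sum.swap)
    also have "\<dots> = (\<Sum>l<n. \<Sum>m<n. \<Sum>k\<in>{1..d+1}. V0 l a * u k l m * V0 m b)" by (intro sum.cong refl sum.swap)
    also have "\<dots> = (\<Sum>l<n. \<Sum>m<n. V0 l a * (\<Sum>k\<in>{1..d+1}. u k l m) * V0 m b)"
      by (intro sum.cong refl) (simp only: sum_distrib_left sum_distrib_right)
    also have "\<dots> = 0" by (intro sum.neutral ballI) (subst usum, auto)
    finally show "(\<Sum>k\<in>{1..d+1}. W k a b) = 0" .
  qed
qed

definition rot :: "nat \<Rightarrow> nat \<Rightarrow> nat \<Rightarrow> real \<Rightarrow> rmat" where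
  "rot n a b s = (\<lambda>i j. (if i = j \<and> (i = a \<or> i = b) then 1 else 0) * cos s + gz a b i j * sin s
      + (if i = j \<and> i < n \<and> i \<noteq> a \<and> i \<noteq> b then 1 else 0))"

lemma rot_deriv: "mat_deriv (rot n a b) (gz a b) 0"
  unfolding mat_deriv_def rot_def
  by (auto intro!: derivative_eq_intros)

lemma rot0: "a < n \<Longrightarrow> b < n \<Longrightarrow> rot n a b 0 = mident n"
  by (auto simp: rot_def mident_def gz_def intro!: ext)

lemma is_mat_rot: "a < n \<Longrightarrow> b < n \<Longrightarrow> is_mat n (rot n a b s)"
  by (auto simp: rot_def is_mat_def gz_def)

lemma is_mat_gz: "a < n \<Longrightarrow> b < n \<Longrightarrow> is_mat n (gz a b)"
  by (auto simp: is_mat_def gz_def)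

lemma orth_rot:
  assumes a: "a < n" and b: "b < n" and ab: "a \<noteq> b"
  shows "orth n (rot n a b s)"
  unfolding orth_def
proof (intro conjI is_mat_rot a b ext)
  fix i j
  let ?R = "rot n a b s"
  show "mmul n (mtr ?R) ?R i j = mident n i j"
  proof (cases "i < n \<and> j < n")
    case False then show ?thesis by (auto simp: mmul_def mident_def)
  next
    case True
    then have ij: "i < n" "j < n" by auto
    show ?thesis
    proof (cases "i = a \<or> i = b")
      case False
      have "mmul n (mtr ?R) ?R i j = (\<Sum>l<n. if l = i then ?R l j else 0)"
        unfolding mmul_entry[OF ij] by (rule sum.cong) (use ij False in \<open>auto simp: mtr_def rot_def gz_def\<close>)
      also have "\<dots> = ?R i j" using ij by (subst sum.delta) auto
      finally show ?thesis using False ij by (auto simp: rot_def gz_def mident_def)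
    next
      case True
      have "mmul n (mtr ?R) ?R i j = ?R a i * ?R a j + ?R b i * ?R b j"
        unfolding mmul_entry[OF ij] mtr_def by (rule sum_two) (use ij True a b ab in \<open>auto simp: rot_def gz_def\<close>)
      then show ?thesis using True ij a b ab
        by (auto simp: rot_def gz_def mident_def algebra_simps sin_cos_squared_add3)
    qed
  qed
qed

lemma mat_deriv_cong: "mat_deriv A A1 t \<Longrightarrow> A1 = A2 \<Longrightarrow> mat_deriv A A2 t"
  by simp

lemma givens_tangent:
  assumes V0: "orth n V0" and a: "a < n" and b: "b < n" and ab: "a \<noteq> b"
  shows "tup d (\<lambda>k. mmul n V0 (mmul n (Wg n d nk a b k) (mtr V0))) \<in> tangent n d nk (conj_tup n d V0 (Jmat n d nk))"
proof -
  let ?R = "rot n a b"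
  let ?J = "Jmat n d nk"
  define G where "G s = conj_tup n d (mmul n V0 (?R s)) ?J" for s
  have orthVR: "orth n (mmul n V0 (?R s))" for s
  proof -
    have "mmul n (mtr (mmul n V0 (?R s))) (mmul n V0 (?R s)) = mmul n (mtr (?R s)) (?R s)"
      using V0 is_mat_rot[OF a b] by (simp add: mtr_mmul mmul_assoc orth_cancel1)
    then show ?thesis using orth_rot[OF a b ab, of s] by (simp add: orth_def)
  qed
  have Gk: "G s k = mmul n V0 (mmul n (mmul n (?R s) (mmul n (?J k) (mtr (?R s)))) (mtr V0))"
    if "k \<in> {1..d+1}" for s k
    using that by (simp add: G_def conj_tup_def tup_def mtr_mmul mmul_assoc)
  have N: "mat_deriv (\<lambda>s. mmul n (?R s) (mmul n (?J k) (mtr (?R s)))) (Wg n d nk a b k) 0" for k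
  proof (rule mat_deriv_cong)
    show "mat_deriv (\<lambda>s. mmul n (?R s) (mmul n (?J k) (mtr (?R s))))
       (madd (mmul n (gz a b) (mmul n (?J k) (mtr (?R 0)))) (mmul n (?R 0) (madd (mmul n mzero (mtr (?R 0))) (mmul n (?J k) (mtr (gz a b)))))) 0"
      by (intro mat_deriv_mmul rot_deriv mat_deriv_const mat_deriv_mtr)
    show "madd (mmul n (gz a b) (mmul n (?J k) (mtr (?R 0)))) (mmul n (?R 0) (madd (mmul n mzero (mtr (?R 0))) (mmul n (?J k) (mtr (gz a b))))) = Wg n d nk a b k"
      using a b by (simp add: rot0 mmul_ident_right mmul_ident_left Wg_def mmul_assoc)
  qed
  have Dk: "mat_deriv (\<lambda>s. G s k) (mmul n V0 (mmul n (Wg n d nk a b k) (mtr V0))) 0" if k: "k \<in> {1..d+1}" for k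
  proof -
    have "mat_deriv (\<lambda>s. mmul n V0 (mmul n (mmul n (?R s) (mmul n (?J k) (mtr (?R s)))) (mtr V0)))
       (madd (mmul n mzero (mmul n (mmul n (?R 0) (mmul n (?J k) (mtr (?R 0)))) (mtr V0)))
          (mmul n V0 (madd (mmul n (Wg n d nk a b k) (mtr V0)) (mmul n (mmul n (?R 0) (mmul n (?J k) (mtr (?R 0)))) mzero)))) 0"
      by (intro mat_deriv_mmul N mat_deriv_const)
    then show ?thesis using k by (simp add: Gk)
  qed
  show ?thesis
    unfolding tangent_def
  proof (intro CollectI exI conjI allI)
    show "G s \<in> Flag n d nk" for s using orthVR by (simp add: G_def flag_mem)
    show "G 0 = conj_tup n d V0 ?J"
      using a b V0 by (simp add: G_def rot0 mmul_ident_right orth_is_mat)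
    show "tup_deriv G (tup d (\<lambda>k. mmul n V0 (mmul n (Wg n d nk a b k) (mtr V0)))) 0"
      unfolding tup_deriv_def
    proof (intro allI)
      fix k i j
      show "((\<lambda>s. G s k i j) has_real_derivative tup d (\<lambda>k. mmul n V0 (mmul n (Wg n d nk a b k) (mtr V0))) k i j) (at 0)"
      proof (cases "k \<in> {1..d+1}")
        case True
        then show ?thesis using Dk[OF True] by (simp add: mat_deriv_def tup_def)
      next
        case False
        then have "(\<lambda>s. G s k i j) = (\<lambda>s. 0)" by (auto simp: G_def conj_tup_def tup_def mzero_def)
        then show ?thesis using False by (auto simp: tup_def mzero_def)
      qed
    qed
  qed
qed

lemma mat_deriv_mdiff:
  "mat_deriv A A' t \<Longrightarrow> mat_deriv B B' t \<Longrightarrow> mat_deriv (\<lambda>s. mdiff (A s) (B s)) (mdiff A' B') t"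
  unfolding mat_deriv_def mdiff_def by (auto intro!: derivative_eq_intros)

lemma mat_deriv_comm:
  assumes "mat_deriv X X1 t"
  shows "mat_deriv (\<lambda>s. comm n (X s) K) (comm n X1 K) t"
proof (rule mat_deriv_cong)
  show "mat_deriv (\<lambda>s. comm n (X s) K) (mdiff (madd (mmul n X1 K) (mmul n (X t) mzero)) (madd (mmul n mzero (X t)) (mmul n K X1))) t"
    unfolding comm_def by (intro mat_deriv_mdiff mat_deriv_mmul assms mat_deriv_const)
  show "mdiff (madd (mmul n X1 K) (mmul n (X t) mzero)) (madd (mmul n mzero (X t)) (mmul n K X1)) = comm n X1 K"
    by (simp add: comm_def)
qed

lemma is_mat_madd[simp]: "is_mat n A \<Longrightarrow> is_mat n B \<Longrightarrow> is_mat n (madd A B)"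
  by (auto simp: is_mat_def madd_def)

lemma is_mat_Wg[simp]: "is_mat n (Wg n d nk a b k)"
  by (simp add: Wg_def)

lemma tinner_tup: "tinner n d (tup d F) u = (\<Sum>k\<in>{1..d+1}. fro n (F k) (u k))"
  unfolding tinner_def fro_def by (intro sum.cong refl) (auto simp: tup_def)

lemma tup_deriv_unique: "tup_deriv G A t \<Longrightarrow> tup_deriv G B t \<Longrightarrow> A = B"
  unfolding tup_deriv_def by (auto intro!: ext DERIV_unique)

lemma Y_deriv:
  fixes d :: nat and nk :: "nat \<Rightarrow> nat"
  assumes V0: "orth n (V t)" and Vd: "mat_deriv V V1 t" and V1: "is_mat n V1"
    and Xd: "mat_deriv X X1 t"
  defines "L \<equiv> mmul n (mtr (V t)) V1"
  defines "AA k \<equiv> madd (madd (mmul n L (comm n (X t) (Jmat n d nk k))) (comm n X1 (Jmat n d nk k)))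
                      (mmul n (comm n (X t) (Jmat n d nk k)) (mtr L))"
  shows "tup_deriv (\<lambda>s. conj_tup n d (V s) (\<lambda>k. comm n (X s) (Jmat n d nk k)))
           (tup d (\<lambda>k. mmul n (V t) (mmul n (AA k) (mtr (V t))))) t"
  unfolding tup_deriv_def
proof (intro allI)
  fix k i j
  show "((\<lambda>s. conj_tup n d (V s) (\<lambda>k. comm n (X s) (Jmat n d nk k)) k i j) has_real_derivative
          tup d (\<lambda>k. mmul n (V t) (mmul n (AA k) (mtr (V t)))) k i j) (at t)"
  proof (cases "1 \<le> k \<and> k \<le> d + 1")
    case False
    then have "(\<lambda>s. conj_tup n d (V s) (\<lambda>k. comm n (X s) (Jmat n d nk k)) k i j) = (\<lambda>s. 0)"
      by (auto simp: conj_tup_def tup_def mzero_def)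
    then show ?thesis using False by (auto simp: tup_def mzero_def)
  next
    case True
    let ?C = "\<lambda>s. comm n (X s) (Jmat n d nk k)"
    have V1eq: "V1 = mmul n (V t) L"
      using orth_cancel2[OF V0 V1] by (simp add: L_def)
    have "mat_deriv (\<lambda>s. mmul n (mmul n (V s) (?C s)) (mtr (V s)))
       (madd (mmul n (madd (mmul n V1 (?C t)) (mmul n (V t) (comm n X1 (Jmat n d nk k)))) (mtr (V t)))
             (mmul n (mmul n (V t) (?C t)) (mtr V1))) t"
      by (intro mat_deriv_mmul mat_deriv_comm Xd Vd mat_deriv_mtr)
    moreover have "madd (mmul n (madd (mmul n V1 (?C t)) (mmul n (V t) (comm n X1 (Jmat n d nk k)))) (mtr (V t)))
             (mmul n (mmul n (V t) (?C t)) (mtr V1)) = mmul n (V t) (mmul n (AA k) (mtr (V t)))"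
      unfolding V1eq AA_def by (simp add: mmul_madd_left mmul_madd_right mmul_assoc mtr_mmul)
    ultimately show ?thesis using True by (simp add: conj_tup_def tup_def mat_deriv_def)
  qed
qed

theorem propositionB2:
  fixes n d :: nat and nk :: "nat \<Rightarrow> nat"
    and V V' X X' :: "real \<Rightarrow> rmat"
  assumes d_pos: "1 \<le> d"
    and nk_first: "0 < nk 1"
    and nk_mono: "\<forall>k. 1 \<le> k \<and> k < d \<longrightarrow> nk k < nk (Suc k)"
    and nk_last: "nk d < n"
    and V_orth: "\<forall>t. orth n (V t)"
    and V_deriv: "\<forall>t. mat_deriv V (V' t) t"
    and Lambda_blocks: "\<forall>t. diag_blocks_zero n d nk (mmul n (mtr (V t)) (V' t))"
    and X_skew: "\<forall>t. skew n (X t)"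
    and X_deriv: "\<forall>t. mat_deriv X (X' t) t"
    and X_blocks: "\<forall>t. diag_blocks_zero n d nk (X t)"
  shows "parallel_along n d nk
           (\<lambda>t. conj_tup n d (V t) (Jmat n d nk))
           (\<lambda>t. conj_tup n d (V t) (\<lambda>k. comm n (X t) (Jmat n d nk k)))
         \<longleftrightarrow> (\<forall>t. X' t = mscale (1/2)
                 (offdiag n d nk (comm n (X t) (mmul n (mtr (V t)) (V' t)))))"
proof -
  let ?J = "Jmat n d nk"
  let ?Y = "\<lambda>t. conj_tup n d (V t) (\<lambda>k. comm n (X t) (?J k))"
  define L where "L t = mmul n (mtr (V t)) (V' t)" for t
  define AA where "AA t k = madd (madd (mmul n (L t) (comm n (X t) (?J k))) (comm n (X' t) (?J k)))
                      (mmul n (comm n (X t) (?J k)) (mtr (L t)))" for t k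
  define Yd where "Yd t = tup d (\<lambda>k. mmul n (V t) (mmul n (AA t k) (mtr (V t))))" for t
  have Vmat: "is_mat n (V s)" for s using V_orth orth_is_mat by blast
  have V1mat: "is_mat n (V' t)" for t
    unfolding is_mat_def
  proof (intro allI impI)
    fix i j assume "n \<le> i \<or> n \<le> j"
    then have "\<forall>s. V s i j = 0" using Vmat unfolding is_mat_def by blast
    then show "V' t i j = 0" using mat_deriv_zero_const V_deriv by blast
  qed
  have F1: "tup_deriv ?Y (Yd t) t" for t
    unfolding Yd_def AA_def L_def
    by (rule Y_deriv[OF V_orth[rule_format] V_deriv[rule_format] V1mat X_deriv[rule_format]])
  have Lskew: "L t j i = - L t i j" for t i j
  proof -
    have "mat_deriv (\<lambda>s. mmul n (mtr (V s)) (V s)) (madd (mmul n (mtr (V' t)) (V t)) (mmul n (mtr (V t)) (V' t))) t"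
      by (intro mat_deriv_mmul mat_deriv_mtr V_deriv[rule_format])
    moreover have "(\<lambda>s. mmul n (mtr (V s)) (V s)) = (\<lambda>s. mident n)" using V_orth by (simp add: orth_def)
    ultimately have "madd (mmul n (mtr (V' t)) (V t)) (mmul n (mtr (V t)) (V' t)) = mzero"
      using mat_deriv_unique mat_deriv_const by metis
    then have "madd (mtr (L t)) (L t) = mzero" by (simp add: L_def mtr_mmul)
    then have "madd (mtr (L t)) (L t) i j = 0" by (simp add: mzero_def)
    then show ?thesis by (simp add: madd_def mtr_def)
  qed
  have Xsk: "X s j i = - X s i j" for s i j
  proof -
    have "mtr (X s) = mscale (-1) (X s)" using X_skew by (simp add: skew_def)
    then have "mtr (X s) i j = mscale (-1) (X s) i j" by simp
    then show ?thesis by (simp add: mtr_def mscale_def)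
  qed
  have X1sk: "X' t j i = - X' t i j" for t i j
  proof -
    have d1: "((\<lambda>s. X s j i) has_real_derivative X' t j i) (at t)" using X_deriv by (simp add: mat_deriv_def)
    have "(\<lambda>s. X s j i) = (\<lambda>s. - X s i j)" by (rule ext) (rule Xsk)
    moreover have "((\<lambda>s. - X s i j) has_real_derivative - X' t i j) (at t)"
      using X_deriv by (auto simp: mat_deriv_def intro!: derivative_eq_intros)
    ultimately have "((\<lambda>s. X s j i) has_real_derivative - X' t i j) (at t)" by simp
    with d1 show ?thesis by (rule DERIV_unique)
  qed
  have X1z: "X' t i j = 0" if "\<not> (i < n \<and> j < n) \<or> blk n d nk i = blk n d nk j" for t i j
  proof -
    have "\<forall>s. X s i j = 0"
    proof (cases "i < n \<and> j < n")
      case True then show ?thesis using that X_blocks unfolding diag_blocks_zero_def by auto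
    next
      case False then show ?thesis using X_skew unfolding skew_def is_mat_def by auto
    qed
    then show ?thesis using mat_deriv_zero_const X_deriv by blast
  qed
  have D: "AA t (blk n d nk a) a b - AA t (blk n d nk b) a b = 2 * comm n (X t) (L t) a b - 4 * X' t a b"
    if "a < n" "b < n" "blk n d nk a \<noteq> blk n d nk b" for t a b
    unfolding AA_def
  proof (rule S2)
    show "diag_blocks_zero n d nk (L t)" using Lambda_blocks by (simp add: L_def)
    show "diag_blocks_zero n d nk (X t)" using X_blocks by simp
    show "\<forall>i j. L t j i = - L t i j" using Lskew by blast
  qed (use that in auto)
  have tzT: "tzero \<in> tangent n d nk (conj_tup n d (V t) ?J)" for t
    by (intro tzero_tangent flag_mem V_orth[rule_format])
  have tdz: "tdiff P tzero = P" for P by (simp add: tdiff_def tzero_def)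
  have inner: "tinner n d (Yd t) u = (\<Sum>k\<in>{1..d+1}. fro n (AA t k) (mmul n (mtr (V t)) (mmul n (u k) (V t))))" for t u
    unfolding Yd_def tinner_tup by (simp add: fro_conj)
  have commsk: "comm n (X t) (L t) b a = - comm n (X t) (L t) a b" if "a < n" "b < n" for t a b
  proof -
    have "comm n (X t) (L t) b a = (\<Sum>c<n. X t b c * L t c a) - (\<Sum>c<n. L t b c * X t c a)"
      using that by (simp add: comm_def mdiff_def mmul_def)
    also have "\<dots> = (\<Sum>c<n. L t a c * X t c b) - (\<Sum>c<n. X t a c * L t c b)"
    proof (intro arg_cong2[where f = "(-)"] sum.cong refl)
      fix c
      show "X t b c * L t c a = L t a c * X t c b" using Xsk[of t c b] Lskew[of t a c] by simp
      show "L t b c * X t c a = X t a c * L t c b" using Xsk[of t c a] Lskew[of t b c] by simp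
    qed
    also have "\<dots> = - comm n (X t) (L t) a b"
      using that by (simp add: comm_def mdiff_def mmul_def)
    finally show ?thesis .
  qed
  show ?thesis
  proof
    assume par: "parallel_along n d nk (\<lambda>t. conj_tup n d (V t) ?J) ?Y"
    show "\<forall>t. X' t = mscale (1/2) (offdiag n d nk (comm n (X t) (mmul n (mtr (V t)) (V' t))))"
    proof (intro allI ext)
      fix t i j
      obtain Y2 where Y2: "tup_deriv ?Y Y2 t" "is_orth_proj n d (tangent n d nk (conj_tup n d (V t) ?J)) Y2 tzero"
        using par unfolding parallel_along_def by blast
      have "Y2 = Yd t" using tup_deriv_unique Y2(1) F1 by blast
      then have orthg: "tinner n d (Yd t) u = 0" if "u \<in> tangent n d nk (conj_tup n d (V t) ?J)" for u
        using Y2(2) that unfolding is_orth_proj_def by (simp add: tdz)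
      show "X' t i j = mscale (1/2) (offdiag n d nk (comm n (X t) (mmul n (mtr (V t)) (V' t)))) i j"
      proof (cases "i < n \<and> j < n \<and> blk n d nk i \<noteq> blk n d nk j")
        case False
        then have "X' t i j = 0" using X1z by blast
        moreover have "offdiag n d nk (comm n (X t) (mmul n (mtr (V t)) (V' t))) i j = 0"
          using False by (auto simp: offdiag_def comm_def mdiff_def mmul_def)
        ultimately show ?thesis by (simp add: mscale_def)
      next
        case True
        then have i: "i < n" and j: "j < n" and pq: "blk n d nk i \<noteq> blk n d nk j" by auto
        have ij: "i \<noteq> j" using pq by auto
        have "tinner n d (Yd t) (tup d (\<lambda>k. mmul n (V t) (mmul n (Wg n d nk i j k) (mtr (V t))))) = 0"
          by (intro orthg givens_tangent V_orth[rule_format] i j ij)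
        moreover have "mmul n (mtr (V t)) (mmul n (tup d (\<lambda>k. mmul n (V t) (mmul n (Wg n d nk i j k) (mtr (V t)))) k) (V t))
               = Wg n d nk i j k" if "k \<in> {1..d+1}" for k
          using that V_orth orth_tail[OF V_orth[rule_format] is_mat_Wg]
          by (simp add: tup_def mmul_assoc orth_cancel1)
        ultimately have "(\<Sum>k\<in>{1..d+1}. fro n (AA t k) (Wg n d nk i j k)) = 0"
          unfolding inner by simp
        then have f1: "2 * (AA t (blk n d nk j) i j + AA t (blk n d nk j) j i) - 2 * (AA t (blk n d nk i) i j + AA t (blk n d nk i) j i) = 0"
          using S3[OF i j pq] by simp
        have f2: "AA t (blk n d nk i) i j - AA t (blk n d nk j) i j = 2 * comm n (X t) (L t) i j - 4 * X' t i j"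
          using D i j pq by blast
        have f3: "AA t (blk n d nk j) j i - AA t (blk n d nk i) j i = 2 * comm n (X t) (L t) j i - 4 * X' t j i"
          using D i j pq by metis
        have f4: "AA t (blk n d nk j) j i - AA t (blk n d nk i) j i = AA t (blk n d nk i) i j - AA t (blk n d nk j) i j"
          using f1 by (simp add: algebra_simps)
        have f5: "2 * comm n (X t) (L t) j i - 4 * X' t j i = - 2 * comm n (X t) (L t) i j + 4 * X' t i j"
          using commsk[OF i j, of t] X1sk[of t j i] by simp
        have "X' t i j = comm n (X t) (L t) i j / 2"
          using f2 f3 f4 f5 by linarith
        then show ?thesis using pq by (simp add: mscale_def offdiag_def L_def)
      qed
    qed
  next
    assume form: "\<forall>t. X' t = mscale (1/2) (offdiag n d nk (comm n (X t) (mmul n (mtr (V t)) (V' t))))"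
    show "parallel_along n d nk (\<lambda>t. conj_tup n d (V t) ?J) ?Y"
      unfolding parallel_along_def
    proof (intro allI exI conjI)
      fix t
      show "tup_deriv ?Y (Yd t) t" by (rule F1)
      show "is_orth_proj n d (tangent n d nk (conj_tup n d (V t) ?J)) (Yd t) tzero"
        unfolding is_orth_proj_def
      proof (intro conjI ballI tzT)
        fix u assume u: "u \<in> tangent n d nk (conj_tup n d (V t) ?J)"
        have C: "\<forall>a<n. \<forall>b<n. blk n d nk a \<noteq> blk n d nk b \<longrightarrow> AA t (blk n d nk a) a b = AA t (blk n d nk b) a b"
        proof (intro allI impI)
          fix a b assume a: "a < n" and b: "b < n" and pq: "blk n d nk a \<noteq> blk n d nk b"
          have "X' t a b = comm n (X t) (L t) a b / 2"
            using form pq by (simp add: mscale_def offdiag_def L_def)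
          then show "AA t (blk n d nk a) a b = AA t (blk n d nk b) a b"
            using D[OF a b pq, of t] by simp
        qed
        show "tinner n d (tdiff (Yd t) tzero) u = 0"
          unfolding tdz inner
          by (rule S1[OF tangent_props(1)[OF V_orth[rule_format] u] tangent_props(2)[OF V_orth[rule_format] u] C])
      qed
    qed
  qed
qed

end
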